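(* For any positive integers $t,s$ with $ts=n$, there is an $[nt,s]$-scheme for \textsc{MIS} on $n$-vertex graphs. This is optimal up to logarithmic factors, since any $(h,v)$-scheme for \textsc{MIS} is known to require $hv=\Omega(n^2)$.
   Context: Annotated streaming model (schemes): a space-bounded Verifier reads an input stream $\sigma$ (here the edges of a graph $G$ on vertex set $[n]$); after the stream ends, an all-powerful Prover sends a help message to the Verifier as a stream. For a problem whose output may be large, the Prover streams a purported output as part of the help, and the Verifier either accepts it or rejects ($\bot$). Requirements: perfect completeness (with the honest help the Verifier accepts a correct output with probability 1) and soundness error at most $1/3$ (for every input and every help message, the probability that the Verifier accepts an incorrect output is at most $1/3$). An $(h,v)$-scheme uses $O(h)$ bits of help and $O(v)$ bits of Verifier space; an $[h,v]$-scheme uses $\tilde{O}(h)$ and $\tilde{O}(v)$ bits respectively, where $\tilde{O}$ hides factors polynomial in $\log n$. \textsc{MIS}: given the graph $G$, output an inclusion-wise maximal independent set of vertices of $G$. *)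

theory Defs
  imports "HOL-Probability.Probability"
begin

text \<open>Input streams: lists of edges of a simple undirected graph on vertex set [n] = {0..<n};
  each edge appears once (in either orientation), no loops.\<close>
definition valid_stream :: "nat \<Rightarrow> (nat \<times> nat) list \<Rightarrow> bool" where
  "valid_stream n \<sigma> \<longleftrightarrow>
     (\<forall>(u, w) \<in> set \<sigma>. u < n \<and> w < n \<and> u \<noteq> w) \<and>
     distinct (map (\<lambda>(u, w). {u, w}) \<sigma>)"

definition adj :: "(nat \<times> nat) list \<Rightarrow> nat \<Rightarrow> nat \<Rightarrow> bool" where
  "adj \<sigma> u w \<longleftrightarrow> (u, w) \<in> set \<sigma> \<or> (w, u) \<in> set \<sigma>"

definition is_MIS :: "nat \<Rightarrow> (nat \<times> nat) list \<Rightarrow> nat set \<Rightarrow> bool" where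
  "is_MIS n \<sigma> S \<longleftrightarrow>
     S \<subseteq> {..<n} \<and>
     (\<forall>u \<in> S. \<forall>w \<in> S. \<not> adj \<sigma> u w) \<and>
     (\<forall>x < n. x \<notin> S \<longrightarrow> (\<exists>y \<in> S. adj \<sigma> x y))"

text \<open>A (non-uniform) streaming verifier: its memory state is a number (v bits means states
  below 2^v); random bits are drawn into the initial state; it processes the input stream
  element by element, then the help message bit by bit, and finally accepts or rejects.\<close>
record verifier =
  v_init :: "nat pmf"
  v_in   :: "nat \<Rightarrow> nat \<times> nat \<Rightarrow> nat"
  v_help :: "nat \<Rightarrow> bool \<Rightarrow> nat"
  v_acc  :: "nat \<Rightarrow> bool"
  v_out  :: "bool list \<Rightarrow> nat set"

definition run :: "verifier \<Rightarrow> (nat \<times> nat) list \<Rightarrow> bool list \<Rightarrow> nat \<Rightarrow> nat" where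
  "run V \<sigma> \<eta> r = foldl (v_help V) (foldl (v_in V) r \<sigma>) \<eta>"

definition accept_prob :: "verifier \<Rightarrow> (nat \<times> nat) list \<Rightarrow> bool list \<Rightarrow> real" where
  "accept_prob V \<sigma> \<eta> = measure_pmf.prob (v_init V) {r. v_acc V (run V \<sigma> \<eta> r)}"

text \<open>V is an (h,v)-scheme for MIS on n-vertex graphs (exact bounds h bits of help,
  v bits of space; constants are handled in the theorem).\<close>
definition is_MIS_scheme :: "nat \<Rightarrow> nat \<Rightarrow> nat \<Rightarrow> verifier \<Rightarrow> bool" where
  "is_MIS_scheme n h v V \<longleftrightarrow>
     set_pmf (v_init V) \<subseteq> {..<2 ^ v} \<and>
     (\<forall>r < 2 ^ v. \<forall>e. v_in V r e < 2 ^ v) \<and>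
     (\<forall>r < 2 ^ v. \<forall>b. v_help V r b < 2 ^ v) \<and>
     (\<forall>\<sigma>. valid_stream n \<sigma> \<longrightarrow>
        (\<exists>\<eta>. length \<eta> \<le> h \<and> is_MIS n \<sigma> (v_out V \<eta>) \<and> accept_prob V \<sigma> \<eta> = 1)) \<and>
     (\<forall>\<sigma> \<eta>. valid_stream n \<sigma> \<longrightarrow> \<not> is_MIS n \<sigma> (v_out V \<eta>) \<longrightarrow>
        accept_prob V \<sigma> \<eta> \<le> 1 / 3)"

end

theory Submission
  imports Defs "HOL-Computational_Algebra.Polynomial"
begin

lemma less_pow_prime: "1 < (p::nat) \<Longrightarrow> k < p ^ k"
proof -
  assume "1 < p"
  have "k < 2 ^ k" by (rule less_exp)
  also have "2 ^ k \<le> p ^ k" using \<open>1 < p\<close> by (intro power_mono) auto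
  finally show ?thesis .
qed

lemma legendre:
  fixes p :: nat assumes p: "prime p"
  shows "multiplicity p (fact n) = (\<Sum>i\<in>{1..n}. n div p ^ i)"
proof (induction n)
  case 0 then show ?case by simp
next
  case (Suc n)
  have p1: "p > 1" using p prime_gt_1_nat by blast
  have A: "multiplicity p (fact (Suc n) :: nat) = multiplicity p (Suc n) + multiplicity p (fact n :: nat)"
  proof -
    have "multiplicity p (Suc n * (fact n :: nat)) = multiplicity p (Suc n) + multiplicity p (fact n :: nat)"
      by (rule prime_elem_multiplicity_mult_distrib) (use p in auto)
    thus ?thesis by (simp only: fact_Suc of_nat_id)
  qed
  have B: "multiplicity p (Suc n) = card {i\<in>{1..n}. p ^ i dvd Suc n}"
  proof -
    have m: "multiplicity p (Suc n) \<le> n"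
    proof -
      have "p ^ multiplicity p (Suc n) dvd Suc n" by (rule multiplicity_dvd)
      hence "p ^ multiplicity p (Suc n) \<le> Suc n" by (rule dvd_imp_le) simp
      moreover have "multiplicity p (Suc n) < p ^ multiplicity p (Suc n)"
        using p1 by (rule less_pow_prime)
      ultimately show ?thesis by linarith
    qed
    have nu: "\<not> is_unit p" using p1 by simp
    have iff: "p ^ i dvd Suc n \<longleftrightarrow> i \<le> multiplicity p (Suc n)" for i
      by (rule power_dvd_iff_le_multiplicity) (use nu in auto)
    have "{i\<in>{1..n}. p ^ i dvd Suc n} = {1..multiplicity p (Suc n)}"
      using m by (auto simp only: iff) auto
    then show ?thesis by simp
  qed
  have C: "(\<Sum>i\<in>{1..Suc n}. Suc n div p ^ i) = (\<Sum>i\<in>{1..n}. Suc n div p ^ i)"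
  proof -
    have "Suc n < p ^ Suc n" using p1 by (rule less_pow_prime)
    hence "Suc n div p ^ Suc n = 0" by simp
    moreover have "(\<Sum>i\<in>{1..Suc n}. Suc n div p ^ i) = (\<Sum>i\<in>{1..n}. Suc n div p ^ i) + Suc n div p ^ Suc n"
      by (rule sum.cl_ivl_Suc[THEN trans]) simp
    ultimately show ?thesis by simp
  qed
  have D: "(\<Sum>i\<in>{1..n}. Suc n div p ^ i) = (\<Sum>i\<in>{1..n}. n div p ^ i + (if p ^ i dvd Suc n then 1 else 0))"
    by (intro sum.cong refl) (simp add: div_Suc dvd_eq_mod_eq_0)
  have E: "(\<Sum>i\<in>{1..n}. n div p ^ i + (if p ^ i dvd Suc n then (1::nat) else 0)) = (\<Sum>i\<in>{1..n}. n div p ^ i) + card {i\<in>{1..n}. p ^ i dvd Suc n}"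
    by (simp add: sum.distrib sum.If_cases) (rule arg_cong[where f=card], auto)
  show ?case using A B C D E Suc.IH by simp
qed


lemma div_double_le: "(2*m) div (q::nat) \<le> 2*(m div q) + 1"
proof (cases "q = 0")
  case True then show ?thesis by simp
next
  case False
  have "2*m = q * (2*(m div q)) + 2*(m mod q)" by (metis distrib_left mult_2 mult_div_mod_eq)
  hence "(2*m) div q = 2*(m div q) + (2*(m mod q)) div q" using False by simp
  moreover have "2*(m mod q) < 2*q" using False by simp
  hence "(2*(m mod q)) div q < 2" using False by (simp add: div_less_iff_less_mult)
  ultimately show ?thesis by linarith
qed

lemma mult_central:
  fixes p m :: nat assumes p: "prime p" and m: "m > 0"
  shows "p ^ multiplicity p ((2*m) choose m) \<le> 2*m"
proof (rule ccontr)
  define e where "e = multiplicity p ((2*m) choose m)"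
  assume "\<not> p ^ multiplicity p ((2*m) choose m) \<le> 2*m"
  hence pe: "p ^ e > 2*m" unfolding e_def by simp
  have p1: "p > 1" using p prime_gt_1_nat by blast
  have "fact (2*m) = (fact m * fact m) * ((2*m) choose m :: nat)"
    using binomial_fact_lemma[of m "2*m"] by (simp add: mult_2 algebra_simps)
  hence "multiplicity p (fact (2*m) :: nat) = multiplicity p (fact m * fact m :: nat) + e"
    unfolding e_def using p by (simp only:) (rule prime_elem_multiplicity_mult_distrib, auto)
  also have "multiplicity p (fact m * fact m :: nat) = 2 * multiplicity p (fact m :: nat)"
    using p by (subst prime_elem_multiplicity_mult_distrib) auto
  finally have eq: "(\<Sum>i\<in>{1..2*m}. 2*m div p ^ i) = 2 * (\<Sum>i\<in>{1..m}. m div p ^ i) + e"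
    using legendre[OF p, of m] legendre[OF p, of "2*m"] by simp
  have "(\<Sum>i\<in>{1..m}. m div p ^ i) = (\<Sum>i\<in>{1..2*m}. m div p ^ i)"
  proof (rule sum.mono_neutral_left)
    show "\<forall>i\<in>{1..2*m} - {1..m}. m div p ^ i = 0"
    proof
      fix i assume "i \<in> {1..2*m} - {1..m}"
      hence "i > m" by auto
      have "m < 2 ^ m" by (rule less_exp)
      also have "2 ^ m \<le> p ^ m" using p1 by (intro power_mono) auto
      also have "p ^ m \<le> p ^ i" using p1 \<open>i > m\<close> by (intro power_increasing) auto
      finally show "m div p ^ i = 0" by simp
    qed
  qed auto
  hence eq2: "(\<Sum>i\<in>{1..2*m}. 2*m div p ^ i) = (\<Sum>i\<in>{1..2*m}. 2*(m div p ^ i)) + e"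
    using eq by (simp add: sum_distrib_left)
  have "(\<Sum>i\<in>{1..2*m}. 2*m div p ^ i) \<le> (\<Sum>i\<in>{1..2*m}. 2*(m div p ^ i) + (if i < e then 1 else 0))"
  proof (rule sum_mono)
    fix i assume "i \<in> {1..2*m}"
    show "2*m div p ^ i \<le> 2*(m div p ^ i) + (if i < e then 1 else 0)"
    proof (cases "i < e")
      case True then show ?thesis using div_double_le[of m "p^i"] by simp
    next
      case False
      have "p ^ e \<le> p ^ i" using p1 False by (intro power_increasing) auto
      with pe show ?thesis by simp
    qed
  qed
  also have "\<dots> = (\<Sum>i\<in>{1..2*m}. 2*(m div p ^ i)) + card {i\<in>{1..2*m}. i < e}"
    by (simp add: sum.distrib sum.If_cases) (rule arg_cong[where f=card], auto)
  finally have "e \<le> card {i\<in>{1..2*m}. i < e}" using eq2 by simp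
  also have "card {i\<in>{1..2*m}. i < e} \<le> card {1..<e}"
    by (intro card_mono) auto
  finally have "e \<le> e - 1" by simp
  moreover have "e > 0"
  proof (rule ccontr)
    assume "\<not> e > 0" hence "e = 0" by simp
    with pe m show False by simp
  qed
  ultimately show False by simp
qed


lemma num_ineq:
  fixes N :: nat assumes N: "N \<ge> 4"
  shows "(2*N^3)^(N+1) < 4^(N^3)"
proof -
  have key: "(3*N+1)*(N+1) < 2*N^3"
  proof -
    have a: "(3*N+1)*(N+1) = 3*(N*N) + 4*N + 1" by (simp add: algebra_simps)
    have b: "2*N^3 = 2*N*(N*N)" by (simp add: power3_eq_cube algebra_simps)
    have c: "20*N \<le> 5*(N*N)" using N by simp
    have d: "8*(N*N) \<le> 2*N*(N*N)" using N by simp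
    show ?thesis unfolding a b using c d N by linarith
  qed
  have "N < 2^N" by (rule less_exp)
  hence "N^3 < (2^N)^3" by (intro power_strict_mono) auto
  hence "2*N^3 < 2^(3*N+1)" by (simp add: power_mult[symmetric] mult.commute)
  hence "(2*N^3)^(N+1) < (2^(3*N+1))^(N+1)" by (intro power_strict_mono) auto
  also have "\<dots> = 2^((3*N+1)*(N+1))" by (rule power_mult[symmetric])
  also have "\<dots> < 2^(2*N^3)" using key by (intro power_strict_increasing) auto
  also have "\<dots> = 4^(N^3)" by (simp add: power_mult)
  finally show ?thesis .
qed


lemma prime_between:
  fixes N :: nat assumes N: "N \<ge> 4"
  shows "\<exists>p. prime p \<and> N < p \<and> p \<le> 2*N^3"
proof (rule ccontr)
  assume no: "\<not> ?thesis"
  define m where "m = N^3"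
  have m0: "m > 0" using N by (simp add: m_def)
  define C where "C = (2*m) choose m"
  have C0: "C > 0" unfolding C_def by simp
  have pf: "prime_factors C \<subseteq> {1..N}"
  proof
    fix q assume q: "q \<in> prime_factors C"
    hence qp: "prime q" and qd: "q dvd C" by auto
    have "C dvd fact (2*m)"
      unfolding C_def using binomial_fact_lemma[of m "2*m"] by (metis dvd_triv_right le_add2 mult_2)
    hence "q dvd fact (2*m)" using qd by (rule dvd_trans[rotated])
    hence "q \<le> 2*m" using qp by (simp add: prime_dvd_fact_iff)
    hence "q \<le> N" using no qp unfolding m_def by (meson not_le)
    moreover have "q \<ge> 1" using qp prime_gt_0_nat by (simp add: Suc_leI)
    ultimately show "q \<in> {1..N}" by simp
  qed
  have "C = (\<Prod>q\<in>prime_factors C. q ^ multiplicity q C)"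
    using prime_factorization_nat[OF C0] .
  also have "\<dots> \<le> (\<Prod>q\<in>prime_factors C. 2*m)"
    by (intro prod_mono) (auto simp: C_def intro!: mult_central m0)
  also have "\<dots> = (2*m) ^ card (prime_factors C)" by simp
  also have "\<dots> \<le> (2*m) ^ N"
  proof -
    have "card (prime_factors C) \<le> card {1..N}" using pf by (intro card_mono) auto
    thus ?thesis using m0 by (intro power_increasing) auto
  qed
  finally have Cle: "C \<le> (2*m)^N" .
  have "4^m / (2*real m) \<le> real C" unfolding C_def by (rule central_binomial_lower_bound[OF m0])
  hence "4^m \<le> real C * (2*real m)" using m0 by (simp add: divide_le_eq)
  also have "\<dots> \<le> real ((2*m)^N) * (2*real m)" using Cle by (intro mult_right_mono) (simp only: of_nat_le_iff, simp)
  also have "\<dots> = real ((2*m)^(N+1))" by simp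
  finally have "(4::nat)^m \<le> (2*m)^(N+1)" by (metis of_nat_le_iff of_nat_numeral of_nat_power)
  with num_ineq[OF N] show False unfolding m_def by simp
qed


lemma coeff_dvd_mult:
  fixes q g :: "int poly"
  assumes "\<forall>k. c dvd coeff g k"
  shows "c dvd coeff (q * g) k"
  unfolding coeff_mult using assms by (intro dvd_sum) auto

lemma roots_mod_prime:
  fixes D :: "int poly" and p :: nat
  assumes p: "prime p" and nz: "\<exists>k. \<not> int p dvd coeff D k"
  shows "card {r \<in> {..<p}. int p dvd poly D (int r)} \<le> degree D"
  using nz
proof (induction "degree D" arbitrary: D rule: less_induct)
  case less
  define Z where "Z = {r \<in> {..<p}. int p dvd poly D (int r)}"
  have pp: "prime (int p)" using p by simp
  show ?case
  proof (cases "Z = {}")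
    case True then show ?thesis unfolding Z_def[symmetric] by simp
  next
    case False
    then obtain a where a: "a < p" "int p dvd poly D (int a)" unfolding Z_def by auto
    define g where "g = synthetic_div D (int a)"
    have decomp: "D = [:- int a, 1:] * g + [:poly D (int a):]"
      unfolding g_def by (rule synthetic_div_correct'[symmetric])
    have gnz: "\<exists>k. \<not> int p dvd coeff g k"
    proof (rule ccontr)
      assume "\<not> ?thesis"
      hence all: "\<forall>k. int p dvd coeff g k" by simp
      have "int p dvd coeff D k" for k
      proof -
        have "coeff D k = coeff ([:- int a, 1:] * g) k + coeff [:poly D (int a):] k"
          by (subst decomp) simp
        moreover have "int p dvd coeff ([:- int a, 1:] * g) k" by (rule coeff_dvd_mult[OF all])
        moreover have "int p dvd coeff [:poly D (int a):] k" using a(2) by (cases k) auto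
        ultimately show ?thesis by simp
      qed
      with less.prems show False by blast
    qed
    have degpos: "degree D > 0"
    proof (rule ccontr)
      assume "\<not> degree D > 0"
      hence "degree D = 0" by simp
      then obtain c where c: "D = [:c:]" by (rule degree_eq_zeroE)
      have "poly D (int a) = c" using c by simp
      hence "int p dvd c" using a(2) by simp
      moreover obtain k where k: "\<not> int p dvd coeff D k" using less.prems by blast
      moreover have "coeff D k = (if k = 0 then c else 0)" using c by (cases k) auto
      ultimately show False by (cases "k = 0") auto
    qed
    have dg: "degree g < degree D" unfolding g_def using degpos by (simp add: degree_synthetic_div)
    have IH: "card {r \<in> {..<p}. int p dvd poly g (int r)} \<le> degree g"
      using less.hyps[OF dg gnz] .
    have sub: "Z \<subseteq> insert a {r \<in> {..<p}. int p dvd poly g (int r)}"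
    proof
      fix r assume "r \<in> Z"
      hence r: "r < p" "int p dvd poly D (int r)" unfolding Z_def by auto
      have "poly D (int r) = (int r - int a) * poly g (int r) + poly D (int a)"
        by (subst decomp) (simp add: algebra_simps)
      hence "int p dvd (int r - int a) * poly g (int r)"
        using r(2) a(2) by (metis dvd_add_right_iff add.commute)
      hence "int p dvd (int r - int a) \<or> int p dvd poly g (int r)"
        using pp by (simp add: prime_dvd_mult_iff)
      moreover have "int p dvd (int r - int a) \<Longrightarrow> r = a"
      proof -
        assume d: "int p dvd (int r - int a)"
        have "\<bar>int r - int a\<bar> < int p" using r(1) a(1) by linarith
        have "int r - int a = 0"
        proof (rule ccontr)
          assume "int r - int a \<noteq> 0"
          from dvd_imp_le_int[OF this d] have "\<bar>int p\<bar> \<le> \<bar>int r - int a\<bar>" .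
          with \<open>\<bar>int r - int a\<bar> < int p\<close> show False by simp
        qed
        thus "r = a" by simp
      qed
      ultimately show "r \<in> insert a {r \<in> {..<p}. int p dvd poly g (int r)}" using r(1) by auto
    qed
    have "card Z \<le> card (insert a {r \<in> {..<p}. int p dvd poly g (int r)})"
      by (rule card_mono[OF _ sub]) simp
    also have "\<dots> \<le> Suc (card {r \<in> {..<p}. int p dvd poly g (int r)})"
      by (rule card_insert_le_m1[THEN le_trans]) (auto intro: card_insert_le)
    also have "\<dots> \<le> Suc (degree g)" using IH by simp
    also have "\<dots> = degree D" using dg unfolding g_def by (simp add: degree_synthetic_div)
    finally show ?thesis unfolding Z_def .
  qed
qed


fun enc :: "nat \<Rightarrow> nat \<Rightarrow> (nat \<Rightarrow> nat) \<Rightarrow> nat" where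
  "enc B 0 f = 0"
| "enc B (Suc m) f = f 0 mod B + B * enc B m (\<lambda>i. f (Suc i))"

definition dec :: "nat \<Rightarrow> nat \<Rightarrow> nat \<Rightarrow> (nat \<Rightarrow> nat)" where
  "dec B m r = (\<lambda>i. if i < m then r div B ^ i mod B else 0)"

definition bnd :: "nat \<Rightarrow> nat \<Rightarrow> (nat \<Rightarrow> nat) \<Rightarrow> bool" where
  "bnd B m f \<longleftrightarrow> (\<forall>i. (i < m \<longrightarrow> f i < B) \<and> (m \<le> i \<longrightarrow> f i = 0))"

lemma enc_lt: "B > 0 \<Longrightarrow> enc B m f < B ^ m"
proof (induction m arbitrary: f)
  case 0 then show ?case by simp
next
  case (Suc m)
  have X: "enc B m (\<lambda>i. f (Suc i)) < B ^ m" by (rule Suc.IH[OF Suc.prems])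
  have "f 0 mod B + B * enc B m (\<lambda>i. f (Suc i)) < B + B * enc B m (\<lambda>i. f (Suc i))"
    using Suc.prems by simp
  also have "\<dots> = B * (enc B m (\<lambda>i. f (Suc i)) + 1)" by simp
  also have "\<dots> \<le> B * B ^ m" using X by (intro mult_le_mono2) simp
  also have "\<dots> = B ^ Suc m" by simp
  finally show ?case by simp
qed

lemma enc_digit: "B > 0 \<Longrightarrow> i < m \<Longrightarrow> enc B m f div B ^ i mod B = f i mod B"
proof (induction m arbitrary: f i)
  case 0 then show ?case by simp
next
  case (Suc m)
  show ?case
  proof (cases i)
    case 0 then show ?thesis by simp
  next
    case (Suc i')
    have "enc B (Suc m) f div B ^ i = (f 0 mod B + B * enc B m (\<lambda>i. f (Suc i))) div B div B ^ i'"
      using Suc by (simp add: div_mult2_eq)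
    also have "(f 0 mod B + B * enc B m (\<lambda>i. f (Suc i))) div B = enc B m (\<lambda>i. f (Suc i))"
      using Suc.prems by simp
    finally show ?thesis using Suc.IH[of i' "\<lambda>i. f (Suc i)"] Suc Suc.prems by simp
  qed
qed

lemma dec_enc: "B > 0 \<Longrightarrow> bnd B m f \<Longrightarrow> dec B m (enc B m f) = f"
  unfolding dec_def bnd_def by (rule ext) (auto simp: enc_digit)

lemma foldl_lift:
  assumes B: "B > 0" and pres: "\<And>f e. bnd B m f \<Longrightarrow> bnd B m (step f e)" and f: "bnd B m f"
  shows "foldl (\<lambda>r e. enc B m (step (dec B m r) e)) (enc B m f) es = enc B m (foldl step f es)
         \<and> bnd B m (foldl step f es)"
  using f
proof (induction es arbitrary: f)
  case Nil then show ?case by simp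
next
  case (Cons e es)
  have "dec B m (enc B m f) = f" using dec_enc[OF B Cons.prems] .
  then show ?case using Cons.IH[OF pres[OF Cons.prems]] by simp
qed


locale misp =
  fixes n t s p L :: nat
  assumes t0: "t > 0" and s0: "s > 0" and ts: "t * s = n" and pp: "prime p"
    and pK: "3 * (n * t + t) \<le> p" and pL: "p \<le> 2 ^ L"
begin

definition K where "K = n * t + t - 1"
definition BB where "BB = (4::nat) ^ L"
definition mm where "mm = 5 + 2 * s"

definition addm :: "nat \<Rightarrow> nat \<Rightarrow> (nat \<Rightarrow> nat) \<Rightarrow> (nat \<Rightarrow> nat)" where
  "addm i v f = f(i := (f i + v) mod p)"

definition sstep :: "(nat \<Rightarrow> nat) \<Rightarrow> nat \<times> nat \<Rightarrow> (nat \<Rightarrow> nat)" where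
  "sstep f e = (case e of (a, b) \<Rightarrow>
     addm (5 + a mod s) (f 0 ^ (b * t + a div s)) (addm (5 + b mod s) (f 0 ^ (a * t + b div s)) f))"

definition bstep :: "nat \<Rightarrow> nat \<Rightarrow> (nat \<Rightarrow> nat) \<Rightarrow> (nat \<Rightarrow> nat)" where
  "bstep k c f = (let f2 = addm 4 (c * f 0 ^ k) (f(3 := (if c < p then f 3 else 0))) in
     if k mod t = t - 1 \<and> k div t < n \<and> c = 0
     then addm (5 + s + (k div t) mod s) (f 0 ^ (t - 1 - (k div t) div s)) f2 else f2)"

definition hstep :: "(nat \<Rightarrow> nat) \<Rightarrow> bool \<Rightarrow> (nat \<Rightarrow> nat)" where
  "hstep f b = (if K * L \<le> f 1 then f else
     if Suc (f 1) mod L = 0 then (bstep (f 1 div L) ((2 * f 2 + of_bool b) mod 2 ^ L) f)(1 := Suc (f 1), 2 := 0)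
     else f(1 := Suc (f 1), 2 := (2 * f 2 + of_bool b) mod 2 ^ L))"

definition acc :: "(nat \<Rightarrow> nat) \<Rightarrow> bool" where
  "acc f \<longleftrightarrow> f 1 = K * L \<and> f 3 = 1 \<and> f 4 = (\<Sum>j<s. f (5 + j) * f (5 + s + j)) mod p"

definition init :: "nat \<Rightarrow> (nat \<Rightarrow> nat)" where
  "init r = (\<lambda>i. if i = 0 then r else if i = 3 then 1 else 0)"

definition bval :: "bool list \<Rightarrow> nat" where
  "bval bs = foldl (\<lambda>a b. 2 * a + of_bool b) 0 bs"

definition blk :: "bool list \<Rightarrow> nat \<Rightarrow> nat" where
  "blk eta k = bval (take L (drop (k * L) eta))"

definition outp :: "bool list \<Rightarrow> nat set" where
  "outp eta = {u. u < n \<and> blk eta (u * t + t - 1) = 0}"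

definition VV :: verifier where
  "VV = \<lparr> v_init = map_pmf (\<lambda>r. enc BB mm (init r)) (pmf_of_set {..<p}),
          v_in = (\<lambda>r e. enc BB mm (sstep (dec BB mm r) e)),
          v_help = (\<lambda>r b. enc BB mm (hstep (dec BB mm r) b)),
          v_acc = (\<lambda>r. acc (dec BB mm r)),
          v_out = outp \<rparr>"

lemma p1: "p > 1" using pp prime_gt_1_nat by blast
lemma n0: "n > 0" using t0 s0 ts by (metis nat_0_less_mult_iff)
lemma L1: "L \<ge> 1" using p1 pL by (cases L) auto
lemma pK': "3 * (n * t) + 3 * t \<le> p" using pK by simp
lemma nt1: "n * t \<ge> 1" using n0 t0 by (simp add: Suc_le_eq)
lemma Kpos: "K \<ge> 1" unfolding K_def using nt1 t0 by linarith
lemma K_lt_p: "K < p" unfolding K_def using pK' t0 by linarith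
lemma n_lt_p: "n < p"
proof -
  have "n \<le> n * t" using t0 by simp
  thus ?thesis using pK' t0 by linarith
qed
lemma p_le_BB: "p \<le> BB"
proof -
  have "(2::nat) ^ L \<le> 4 ^ L" by (intro power_mono) auto
  thus ?thesis using pL unfolding BB_def by linarith
qed
lemma twoL_le_BB: "2 ^ L \<le> BB"
  unfolding BB_def by (intro power_mono) auto
lemma KL_lt_BB: "K * L < BB"
proof -
  have "K < 2 ^ L" using K_lt_p pL by linarith
  moreover have "L < 2 ^ L" by (rule less_exp)
  ultimately have "K * L < 2 ^ L * 2 ^ L" by (intro mult_strict_mono) auto
  also have "\<dots> = BB" unfolding BB_def by (simp add: power_mult_distrib[symmetric])
  finally show ?thesis .
qed
lemma BB0: "BB > 0" unfolding BB_def by simp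

lemma bnd_addm: "bnd BB mm f \<Longrightarrow> i < mm \<Longrightarrow> bnd BB mm (addm i v f)"
proof -
  assume f: "bnd BB mm f" and i: "i < mm"
  have "(f i + v) mod p < p" using p1 by simp
  hence "(f i + v) mod p < BB" using p_le_BB by linarith
  thus ?thesis using f i unfolding bnd_def addm_def by auto
qed

lemma bnd_sstep: "bnd BB mm f \<Longrightarrow> bnd BB mm (sstep f e)"
proof -
  assume f: "bnd BB mm f"
  obtain a b where e: "e = (a, b)" by (cases e)
  have "a mod s < s" "b mod s < s" using s0 by auto
  hence i: "5 + a mod s < mm" "5 + b mod s < mm" unfolding mm_def by linarith+
  show ?thesis unfolding sstep_def e prod.case by (rule bnd_addm[OF bnd_addm[OF f i(2)] i(1)])
qed

lemma bnd_bstep: "bnd BB mm f \<Longrightarrow> bnd BB mm (bstep k c f)"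
proof -
  assume f: "bnd BB mm f"
  have f3: "bnd BB mm (f(3 := (if c < p then f 3 else 0)))"
    using f BB0 unfolding bnd_def mm_def by auto
  have "(k div t) mod s < s" using s0 by auto
  hence i: "5 + s + (k div t) mod s < mm" "4 < mm" unfolding mm_def by auto
  show ?thesis unfolding bstep_def Let_def
    using bnd_addm[OF bnd_addm[OF f3 i(2)] i(1)] bnd_addm[OF f3 i(2)] by presburger
qed

lemma bnd_hstep: "bnd BB mm f \<Longrightarrow> bnd BB mm (hstep f b)"
proof -
  assume f: "bnd BB mm f"
  have "(2 * f 2 + of_bool b) mod 2 ^ L < BB" using twoL_le_BB
    by (meson less_le_trans mod_less_divisor zero_less_numeral zero_less_power)
  moreover have "\<not> K * L \<le> f 1 \<Longrightarrow> Suc (f 1) < BB" using KL_lt_BB by linarith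
  moreover have "1 < mm" "2 < mm" unfolding mm_def by auto
  ultimately show ?thesis using f bnd_bstep[OF f]
    unfolding hstep_def bnd_def by auto
qed

lemma bnd_init: "r < p \<Longrightarrow> bnd BB mm (init r)"
  using p_le_BB p1 unfolding bnd_def init_def mm_def by auto

end

definition Adj :: "(nat \<times> nat) list \<Rightarrow> (nat \<times> nat) set" where
  "Adj \<sigma> = {(u, w). adj \<sigma> u w}"

lemma Adj_sub: "valid_stream n \<sigma> \<Longrightarrow> Adj \<sigma> \<subseteq> {..<n} \<times> {..<n}"
  unfolding Adj_def adj_def valid_stream_def by auto

lemma finite_Adj: "valid_stream n \<sigma> \<Longrightarrow> finite (Adj \<sigma>)"
  by (rule finite_subset[OF Adj_sub]) auto

lemma sum_swap_stream:
  fixes h :: "nat \<times> nat \<Rightarrow> nat"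
  assumes v: "valid_stream n \<sigma>"
  shows "sum_list (map (\<lambda>e. h e + h (prod.swap e)) \<sigma>) = sum h (Adj \<sigma>)"
proof -
  let ?f = "\<lambda>(u::nat, w::nat). {u, w}"
  have dm: "distinct (map ?f \<sigma>)" using v unfolding valid_stream_def by simp
  hence d: "distinct \<sigma>" and inj: "inj_on ?f (set \<sigma>)" by (simp_all add: distinct_map)
  have noloop: "\<And>a b. (a, b) \<in> set \<sigma> \<Longrightarrow> a \<noteq> b" using v unfolding valid_stream_def by auto
  have "sum_list (map (\<lambda>e. h e + h (prod.swap e)) \<sigma>) = (\<Sum>e\<in>set \<sigma>. h e + h (prod.swap e))"
    using d by (simp add: sum_list_distinct_conv_sum_set)
  also have "\<dots> = sum h (set \<sigma>) + sum (h \<circ> prod.swap) (set \<sigma>)" by (simp add: sum.distrib)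
  also have "sum (h \<circ> prod.swap) (set \<sigma>) = sum h (prod.swap ` set \<sigma>)"
    by (rule sum.reindex[symmetric]) (auto intro: inj_onI)
  also have "sum h (set \<sigma>) + sum h (prod.swap ` set \<sigma>) = sum h (set \<sigma> \<union> prod.swap ` set \<sigma>)"
  proof (rule sum.union_disjoint[symmetric])
    show "set \<sigma> \<inter> prod.swap ` set \<sigma> = {}"
    proof (rule ccontr)
      assume "set \<sigma> \<inter> prod.swap ` set \<sigma> \<noteq> {}"
      then obtain a b where ab: "(a, b) \<in> set \<sigma>" "(b, a) \<in> set \<sigma>" by auto
      have "?f (a, b) = ?f (b, a)" by auto
      with inj ab have "(a, b) = (b, a)" by (meson inj_onD)
      with noloop[OF ab(1)] show False by simp
    qed
  qed auto
  also have "set \<sigma> \<union> prod.swap ` set \<sigma> = Adj \<sigma>"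
    unfolding Adj_def adj_def by auto
  finally show ?thesis .
qed

context misp begin

definition contrib :: "nat \<Rightarrow> nat \<Rightarrow> nat \<times> nat \<Rightarrow> nat" where
  "contrib r j e = (case e of (a, b) \<Rightarrow>
     (if b mod s = j then r ^ (a * t + b div s) else 0) + (if a mod s = j then r ^ (b * t + a div s) else 0))"

definition Ptrue :: "(nat \<times> nat) list \<Rightarrow> nat \<Rightarrow> nat \<Rightarrow> nat" where
  "Ptrue \<sigma> r j = (\<Sum>x\<in>Adj \<sigma>. if snd x mod s = j then r ^ (fst x * t + snd x div s) else 0)"

lemma contrib_sum: "valid_stream n \<sigma> \<Longrightarrow> sum_list (map (contrib r j) \<sigma>) = Ptrue \<sigma> r j"
proof -
  assume v: "valid_stream n \<sigma>"
  let ?h = "\<lambda>x::nat\<times>nat. if snd x mod s = j then r ^ (fst x * t + snd x div s) else 0"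
  have "contrib r j = (\<lambda>e. ?h e + ?h (prod.swap e))"
    by (rule ext) (auto simp: contrib_def)
  thus ?thesis using sum_swap_stream[OF v, of ?h] unfolding Ptrue_def by simp
qed

definition inP :: "nat \<Rightarrow> bool" where "inP i \<longleftrightarrow> 5 \<le> i \<and> i < 5 + s"

lemma sstep_val:
  assumes "\<forall>i. inP i \<longrightarrow> f i < p"
  shows "sstep f e = (\<lambda>i. if inP i then (f i + contrib (f 0) (i - 5) e) mod p else f i)"
proof -
  obtain a b where e: "e = (a, b)" by (cases e)
  show ?thesis
  proof (rule ext)
    fix i
    have ra: "inP (5 + a mod s)" "inP (5 + b mod s)" using s0 unfolding inP_def by auto
    show "sstep f e i = (if inP i then (f i + contrib (f 0) (i - 5) e) mod p else f i)"
    proof (cases "inP i")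
      case False
      then show ?thesis using ra unfolding sstep_def e addm_def by auto
    next
      case True
      have fi: "f i mod p = f i" using assms True by simp
      have "i - 5 = b mod s \<longleftrightarrow> i = 5 + b mod s" "i - 5 = a mod s \<longleftrightarrow> i = 5 + a mod s"
        using True unfolding inP_def by auto
      then show ?thesis using True fi
        unfolding sstep_def e addm_def contrib_def by (auto simp: mod_add_left_eq add.assoc)
    qed
  qed
qed

lemma foldl_sstep:
  assumes "\<forall>i. inP i \<longrightarrow> f i < p"
  shows "foldl sstep f \<sigma> = (\<lambda>i. if inP i then (f i + sum_list (map (contrib (f 0) (i - 5)) \<sigma>)) mod p else f i)"
  using assms
proof (induction \<sigma> arbitrary: f)
  case Nil
  then show ?case by (auto intro!: ext)
next
  case (Cons e \<sigma>)
  let ?g = "sstep f e"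
  have g: "?g = (\<lambda>i. if inP i then (f i + contrib (f 0) (i - 5) e) mod p else f i)"
    by (rule sstep_val[OF Cons.prems])
  have g0: "?g 0 = f 0" unfolding g inP_def by simp
  have gp: "\<forall>i. inP i \<longrightarrow> ?g i < p" unfolding g using p1 by auto
  show ?case using Cons.IH[OF gp] unfolding g0
    by (auto intro!: ext simp: g mod_add_left_eq add.assoc)
qed

definition F0 :: "(nat \<times> nat) list \<Rightarrow> nat \<Rightarrow> (nat \<Rightarrow> nat)" where
  "F0 \<sigma> r = (\<lambda>i. if i = 0 then r else if i = 3 then 1 else if inP i then Ptrue \<sigma> r (i - 5) mod p else 0)"

lemma stream_result:
  assumes v: "valid_stream n \<sigma>"
  shows "foldl sstep (init r) \<sigma> = F0 \<sigma> r"
proof -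
  have "\<forall>i. inP i \<longrightarrow> init r i < p" using p1 unfolding init_def inP_def by auto
  from foldl_sstep[OF this] show ?thesis
    unfolding F0_def by (auto intro!: ext simp: contrib_sum[OF v] init_def inP_def)
qed

end

context misp begin

lemma bval_snoc: "bval (xs @ [b]) = 2 * bval xs + of_bool b"
  unfolding bval_def by simp

lemma bval_lt: "bval xs < 2 ^ length xs"
proof (induction xs rule: rev_induct)
  case Nil then show ?case by (simp add: bval_def)
next
  case (snoc x xs)
  then show ?case by (simp add: bval_snoc)
qed

lemma bstep_upd12: "bstep k c (G(1 := a, 2 := b)) = (bstep k c G)(1 := a, 2 := b)"
  unfolding bstep_def addm_def Let_def by (auto intro!: ext)

lemma bstep_1: "bstep k c G 1 = G 1"
  unfolding bstep_def addm_def Let_def by auto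

lemma block_partial:
  assumes G1: "G 1 = k * L" and G2: "G 2 = 0" and k: "k < K" and len: "length bs = L" and i: "i < L"
  shows "foldl hstep G (take i bs) = G(1 := k * L + i, 2 := bval (take i bs))"
  using i
proof (induction i)
  case 0
  then show ?case using G1 G2 by (auto intro!: ext simp: bval_def)
next
  case (Suc i)
  have il: "i < length bs" using Suc.prems len by simp
  have tk: "take (Suc i) bs = take i bs @ [bs ! i]" using il by (simp add: take_Suc_conv_app_nth)
  have kl: "k * L + i < K * L"
  proof -
    have "k * L + i < k * L + L" using Suc.prems by simp
    also have "\<dots> = Suc k * L" by simp
    also have "\<dots> \<le> K * L" using k by (intro mult_le_mono1) simp
    finally show ?thesis .
  qed
  have md: "Suc (k * L + i) mod L \<noteq> 0"
  proof -
    have "Suc (k * L + i) mod L = Suc i mod L" by (simp add: add.commute)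
    also have "\<dots> = Suc i" using Suc.prems by simp
    finally show ?thesis by simp
  qed
  have bv: "(2 * bval (take i bs) + of_bool (bs ! i)) mod 2 ^ L = bval (take (Suc i) bs)"
  proof -
    have "bval (take (Suc i) bs) < 2 ^ length (take (Suc i) bs)" by (rule bval_lt)
    also have "\<dots> \<le> 2 ^ L" using len by (intro power_increasing) auto
    finally show ?thesis unfolding tk bval_snoc by simp
  qed
  have ih: "foldl hstep G (take i bs) = G(1 := k * L + i, 2 := bval (take i bs))"
    using Suc.prems by (intro Suc.IH) simp
  have "foldl hstep G (take (Suc i) bs) = hstep (G(1 := k * L + i, 2 := bval (take i bs))) (bs ! i)"
    by (simp only: tk foldl_append ih foldl.simps)
  also have "\<dots> = G(1 := k * L + Suc i, 2 := bval (take (Suc i) bs))"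
    unfolding hstep_def using kl md bv by (auto intro!: ext)
  finally show ?case .
qed

lemma block_full:
  assumes G1: "G 1 = k * L" and G2: "G 2 = 0" and k: "k < K" and len: "length bs = L"
  shows "foldl hstep G bs = (bstep k (bval bs) G)(1 := Suc k * L, 2 := 0)"
proof -
  have L0: "L - 1 < L" using L1 by simp
  have bs: "bs = take (L - 1) bs @ [bs ! (L - 1)]"
    using len L1 by (metis Suc_pred' id_take_nth_drop lessI less_le_trans take_all drop_all le_refl
        append.right_neutral One_nat_def le_imp_less_Suc zero_less_one)
  have part: "foldl hstep G (take (L - 1) bs) = G(1 := k * L + (L - 1), 2 := bval (take (L - 1) bs))"
    by (rule block_partial[OF G1 G2 k len L0])
  have kl: "k * L + (L - 1) < K * L"
  proof -
    have "k * L + (L - 1) < k * L + L" using L1 by simp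
    also have "\<dots> = Suc k * L" by simp
    also have "\<dots> \<le> K * L" using k by (intro mult_le_mono1) simp
    finally show ?thesis .
  qed
  have sc: "Suc (k * L + (L - 1)) = Suc k * L" using L1 by simp
  have dv: "(k * L + (L - 1)) div L = k" using L1
    by (metis add_cancel_left_right diff_less div_by_1 div_greater_zero_iff
      div_less div_mult_self3 not_add_less2 zero_less_one)
  have bv: "(2 * bval (take (L - 1) bs) + of_bool (bs ! (L - 1))) mod 2 ^ L = bval bs"
  proof -
    have lt: "bval bs < 2 ^ L" using bval_lt[of bs] len by simp
    have "bval bs = bval (take (L - 1) bs @ [bs ! (L - 1)])" by (rule arg_cong[OF bs])
    also have "\<dots> = 2 * bval (take (L - 1) bs) + of_bool (bs ! (L - 1))" by (rule bval_snoc)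
    finally show ?thesis using lt by simp
  qed
  have "foldl hstep G bs = hstep (G(1 := k * L + (L - 1), 2 := bval (take (L - 1) bs))) (bs ! (L - 1))"
  proof -
    have "foldl hstep G bs = foldl hstep G (take (L - 1) bs @ [bs ! (L - 1)])" by (rule arg_cong[OF bs])
    thus ?thesis by (simp only: foldl_append foldl.simps part)
  qed
  also have "\<dots> = (bstep k (bval bs) G)(1 := Suc k * L, 2 := 0)"
  proof -
    let ?G = "G(1 := k * L + (L - 1), 2 := bval (take (L - 1) bs))"
    have e: "\<not> K * L \<le> ?G 1" "Suc (?G 1) mod L = 0" using kl sc by auto
    have "hstep ?G (bs ! (L - 1)) = (bstep (?G 1 div L) ((2 * ?G 2 + of_bool (bs ! (L - 1))) mod 2 ^ L) ?G)(1 := Suc (?G 1), 2 := 0)"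
      unfolding hstep_def using e by simp
    also have "\<dots> = (bstep k (bval bs) ?G)(1 := Suc k * L, 2 := 0)"
      using dv bv sc by (simp add: add.commute)
    also have "\<dots> = (bstep k (bval bs) G)(1 := Suc k * L, 2 := 0)"
      unfolding bstep_upd12 by (rule ext) simp
    finally show ?thesis .
  qed
  finally show ?thesis .
qed

end

context misp begin

definition inQ :: "nat \<Rightarrow> bool" where "inQ i \<longleftrightarrow> 5 + s \<le> i \<and> i < 5 + 2 * s"

definition qt :: "nat \<Rightarrow> bool list \<Rightarrow> nat \<Rightarrow> nat \<Rightarrow> nat" where
  "qt r eta j i = (if i mod t = t - 1 \<and> i div t < n \<and> blk eta i = 0 \<and> (i div t) mod s = j
                    then r ^ (t - 1 - (i div t) div s) else 0)"

definition HS :: "(nat \<times> nat) list \<Rightarrow> nat \<Rightarrow> bool list \<Rightarrow> nat \<Rightarrow> (nat \<Rightarrow> nat)" where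
  "HS \<sigma> r eta k = (\<lambda>i. if i = 1 then k * L
      else if i = 3 then (if \<forall>i'<k. blk eta i' < p then 1 else 0)
      else if i = 4 then (\<Sum>i'<k. blk eta i' * r ^ i') mod p
      else if inQ i then (\<Sum>i'<k. qt r eta (i - 5 - s) i') mod p
      else F0 \<sigma> r i)"

lemma HS_0: "HS \<sigma> r eta 0 = F0 \<sigma> r"
  unfolding HS_def F0_def inQ_def inP_def by (auto intro!: ext)

lemma HS_step:
  assumes k: "k < K" and len: "K * L \<le> length eta"
  shows "foldl hstep (HS \<sigma> r eta k) (take L (drop (k * L) eta)) = HS \<sigma> r eta (Suc k)"
proof -
  let ?G = "HS \<sigma> r eta k"
  let ?c = "blk eta k"
  have G1: "?G 1 = k * L" unfolding HS_def by simp
  have G2: "?G 2 = 0" unfolding HS_def F0_def inQ_def inP_def by simp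
  have G0: "?G 0 = r" unfolding HS_def F0_def inQ_def by simp
  have lb: "length (take L (drop (k * L) eta)) = L"
  proof -
    have "Suc k * L \<le> K * L" using k by (intro mult_le_mono1) simp
    thus ?thesis using len by simp
  qed
  have "foldl hstep ?G (take L (drop (k * L) eta)) = (bstep k ?c ?G)(1 := Suc k * L, 2 := 0)"
    using block_full[OF G1 G2 k lb] unfolding blk_def .
  also have "\<dots> = HS \<sigma> r eta (Suc k)"
  proof (rule ext)
    fix i
    let ?w = "k div t"
    let ?cond = "k mod t = t - 1 \<and> ?w < n \<and> ?c = 0"
    let ?iq = "5 + s + ?w mod s"
    have iq: "inQ ?iq" "?iq \<noteq> 0" "?iq \<noteq> 1" "?iq \<noteq> 2" "?iq \<noteq> 3" "?iq \<noteq> 4"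
      using s0 unfolding inQ_def by auto
    show "((bstep k ?c ?G)(1 := Suc k * L, 2 := 0)) i = HS \<sigma> r eta (Suc k) i"
    proof -
      consider "i = 0" | "i = 1" | "i = 2" | "i = 3" | "i = 4" | "inQ i" | "i \<notin> {0,1,2,3,4}" "\<not> inQ i" by blast
      then show ?thesis
      proof cases
        case 1
        have "\<not> inQ 0" unfolding inQ_def by simp
        then show ?thesis using 1 G0 iq unfolding bstep_def addm_def Let_def HS_def F0_def by auto
      next
        case 2 then show ?thesis by (simp add: HS_def)
      next
        case 3 then show ?thesis unfolding HS_def F0_def inQ_def inP_def by simp
      next
        case 4
        have "bstep k ?c ?G 3 = (if ?c < p then ?G 3 else 0)"
          using iq unfolding bstep_def addm_def Let_def by auto
        also have "\<dots> = (if \<forall>i'<Suc k. blk eta i' < p then 1 else 0)"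
          unfolding HS_def by (auto simp: less_Suc_eq)
        finally show ?thesis using 4 unfolding HS_def by simp
      next
        case 5
        have "bstep k ?c ?G 4 = (?G 4 + ?c * r ^ k) mod p"
          using iq G0 unfolding bstep_def addm_def Let_def by auto
        also have "\<dots> = ((\<Sum>i'<k. blk eta i' * r ^ i') mod p + ?c * r ^ k) mod p"
          unfolding HS_def by simp
        also have "\<dots> = (\<Sum>i'<Suc k. blk eta i' * r ^ i') mod p"
          by (simp add: mod_add_left_eq)
        finally show ?thesis using 5 unfolding HS_def by simp
      next
        case 6
        have i5: "i \<noteq> 0" "i \<noteq> 1" "i \<noteq> 2" "i \<noteq> 3" "i \<noteq> 4" using 6 unfolding inQ_def by auto
        have Gi: "?G i = (\<Sum>i'<k. qt r eta (i - 5 - s) i') mod p" using 6 i5 unfolding HS_def by simp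
        have "bstep k ?c ?G i = (if ?cond \<and> i = ?iq then (?G i + r ^ (t - 1 - ?w div s)) mod p else ?G i)"
          using i5 G0 unfolding bstep_def addm_def Let_def by auto
        also have "\<dots> = (\<Sum>i'<Suc k. qt r eta (i - 5 - s) i') mod p"
        proof (cases "?cond \<and> i = ?iq")
          case True
          hence "qt r eta (i - 5 - s) k = r ^ (t - 1 - ?w div s)" unfolding qt_def by auto
          thus ?thesis using True Gi by (simp add: mod_add_left_eq)
        next
          case False
          have "qt r eta (i - 5 - s) k = 0"
          proof -
            have "i - 5 - s = ?w mod s \<Longrightarrow> i = ?iq" using 6 unfolding inQ_def by auto
            thus ?thesis using False unfolding qt_def by auto
          qed
          thus ?thesis using False Gi by (simp only: if_False if_not_P[OF False] sum.lessThan_Suc) simp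
        qed
        finally show ?thesis using 6 i5 unfolding HS_def by simp
      next
        case 7
        have "bstep k ?c ?G i = ?G i"
          using 7 iq unfolding bstep_def addm_def Let_def by auto
        then show ?thesis using 7 unfolding HS_def by simp
      qed
    qed
  qed
  finally show ?thesis .
qed

lemma HS_upto:
  assumes len: "K * L \<le> length eta"
  shows "k \<le> K \<Longrightarrow> foldl hstep (F0 \<sigma> r) (take (k * L) eta) = HS \<sigma> r eta k"
proof (induction k)
  case 0 then show ?case by (simp add: HS_0)
next
  case (Suc k)
  have "take (k * L + L) eta = take (k * L) eta @ take L (drop (k * L) eta)"
    by (rule take_add)
  hence "take (Suc k * L) eta = take (k * L) eta @ take L (drop (k * L) eta)"
    by (simp add: add.commute)
  then show ?case using Suc HS_step[OF _ len, of k] by simp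
qed

lemma hstep_sat: "K * L \<le> G 1 \<Longrightarrow> foldl hstep G bs = G"
  by (induction bs) (auto simp: hstep_def)

lemma hstep_pos: "G 1 \<le> K * L \<Longrightarrow> (foldl hstep G bs) 1 = min (G 1 + length bs) (K * L)"
proof (induction bs arbitrary: G)
  case Nil then show ?case by simp
next
  case (Cons b bs)
  have h1: "hstep G b 1 = (if K * L \<le> G 1 then G 1 else Suc (G 1))"
    unfolding hstep_def by auto
  show ?case using Cons.IH[of "hstep G b"] Cons.prems h1 by (cases "K * L \<le> G 1") auto
qed

lemma final_long:
  assumes len: "K * L \<le> length eta"
  shows "foldl hstep (F0 \<sigma> r) eta = HS \<sigma> r eta K"
proof -
  have "eta = take (K * L) eta @ drop (K * L) eta" by simp
  hence "foldl hstep (F0 \<sigma> r) eta = foldl hstep (foldl hstep (F0 \<sigma> r) (take (K * L) eta)) (drop (K * L) eta)"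
    by (metis foldl_append)
  also have "\<dots> = foldl hstep (HS \<sigma> r eta K) (drop (K * L) eta)" using HS_upto[OF len] by simp
  also have "\<dots> = HS \<sigma> r eta K" by (rule hstep_sat) (simp add: HS_def)
  finally show ?thesis .
qed

lemma acc_short: "length eta < K * L \<Longrightarrow> \<not> acc (foldl hstep (F0 \<sigma> r) eta)"
proof -
  assume "length eta < K * L"
  moreover have "F0 \<sigma> r 1 = 0" unfolding F0_def inP_def by simp
  ultimately have "(foldl hstep (F0 \<sigma> r) eta) 1 = length eta" using hstep_pos[of "F0 \<sigma> r" eta] by simp
  with \<open>length eta < K * L\<close> show ?thesis unfolding acc_def by simp
qed

lemma acc_long:
  assumes len: "K * L \<le> length eta"
  shows "acc (foldl hstep (F0 \<sigma> r) eta) \<longleftrightarrow>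
    (\<forall>i<K. blk eta i < p) \<and>
    (\<Sum>i<K. blk eta i * r ^ i) mod p = (\<Sum>j<s. (Ptrue \<sigma> r j mod p) * ((\<Sum>i<K. qt r eta j i) mod p)) mod p"
proof -
  have a: "HS \<sigma> r eta K (5 + j) = Ptrue \<sigma> r j mod p" if "j < s" for j
    using that unfolding HS_def F0_def inQ_def inP_def by simp
  have b: "HS \<sigma> r eta K (5 + s + j) = (\<Sum>i<K. qt r eta j i) mod p" if "j < s" for j
    using that unfolding HS_def inQ_def by simp
  have "(\<Sum>j<s. HS \<sigma> r eta K (5 + j) * HS \<sigma> r eta K (5 + s + j)) =
        (\<Sum>j<s. (Ptrue \<sigma> r j mod p) * ((\<Sum>i<K. qt r eta j i) mod p))"
    using a b by (intro sum.cong) auto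
  then show ?thesis unfolding final_long[OF len] acc_def by (simp add: HS_def)
qed

end

context misp begin

definition ex :: "nat \<times> nat \<Rightarrow> nat \<Rightarrow> nat" where
  "ex x w = fst x * t + snd x div s + (t - 1 - w div s)"

definition Qtrue :: "nat set \<Rightarrow> nat \<Rightarrow> nat \<Rightarrow> nat" where
  "Qtrue S r j = (\<Sum>w<n. if w \<in> S \<and> w mod s = j then r ^ (t - 1 - w div s) else 0)"

definition Rpoly :: "(nat \<times> nat) list \<Rightarrow> nat set \<Rightarrow> int poly" where
  "Rpoly \<sigma> S = (\<Sum>x\<in>Adj \<sigma>. \<Sum>w<n. monom (if w \<in> S \<and> w mod s = snd x mod s then 1 else 0) (ex x w))"

definition rc :: "(nat \<times> nat) list \<Rightarrow> nat set \<Rightarrow> nat \<Rightarrow> nat" where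
  "rc \<sigma> S k = (\<Sum>x\<in>Adj \<sigma>. \<Sum>w<n. if w \<in> S \<and> w mod s = snd x mod s \<and> ex x w = k then 1 else 0)"

definition dS :: "(nat \<times> nat) list \<Rightarrow> nat set \<Rightarrow> nat \<Rightarrow> nat" where
  "dS \<sigma> S u = (\<Sum>x\<in>Adj \<sigma>. if fst x = u \<and> snd x \<in> S then 1 else 0)"

lemma coeff_R: "coeff (Rpoly \<sigma> S) k = int (rc \<sigma> S k)"
  unfolding Rpoly_def rc_def of_nat_sum coeff_sum by (intro sum.cong refl) (simp add: coeff_monom)

lemma eval_nat:
  "(\<Sum>j<s. Ptrue \<sigma> r j * Qtrue S r j) =
   (\<Sum>x\<in>Adj \<sigma>. \<Sum>w<n. if w \<in> S \<and> w mod s = snd x mod s then r ^ ex x w else 0)"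
proof -
  have "(\<Sum>j<s. Ptrue \<sigma> r j * Qtrue S r j) =
        (\<Sum>j<s. \<Sum>x\<in>Adj \<sigma>. \<Sum>w<n. (if snd x mod s = j then r ^ (fst x * t + snd x div s) else 0) *
                                    (if w \<in> S \<and> w mod s = j then r ^ (t - 1 - w div s) else 0))"
    unfolding Ptrue_def Qtrue_def by (simp add: sum_product)
  also have "\<dots> = (\<Sum>x\<in>Adj \<sigma>. \<Sum>w<n. \<Sum>j<s. (if snd x mod s = j then r ^ (fst x * t + snd x div s) else 0) *
                                    (if w \<in> S \<and> w mod s = j then r ^ (t - 1 - w div s) else 0))"
    by (subst sum.swap) (simp add: sum.swap[of _ "{..<s}"])
  also have "\<dots> = (\<Sum>x\<in>Adj \<sigma>. \<Sum>w<n. if w \<in> S \<and> w mod s = snd x mod s then r ^ ex x w else 0)"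
  proof (intro sum.cong refl)
    fix x w
    have "(\<Sum>j<s. (if snd x mod s = j then r ^ (fst x * t + snd x div s) else 0) *
                  (if w \<in> S \<and> w mod s = j then r ^ (t - 1 - w div s) else 0)) =
          (\<Sum>j<s. if j = snd x mod s then (if w \<in> S \<and> w mod s = snd x mod s then r ^ ex x w else 0) else 0)"
      by (intro sum.cong refl) (auto simp: ex_def power_add)
    also have "\<dots> = (if w \<in> S \<and> w mod s = snd x mod s then r ^ ex x w else 0)"
      using s0 by (simp add: sum.delta)
    finally show "(\<Sum>j<s. (if snd x mod s = j then r ^ (fst x * t + snd x div s) else 0) *
                  (if w \<in> S \<and> w mod s = j then r ^ (t - 1 - w div s) else 0)) =
          (if w \<in> S \<and> w mod s = snd x mod s then r ^ ex x w else 0)" .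
  qed
  finally show ?thesis .
qed

lemma eval_R: "poly (Rpoly \<sigma> S) (int r) = int (\<Sum>j<s. Ptrue \<sigma> r j * Qtrue S r j)"
  unfolding eval_nat Rpoly_def poly_sum of_nat_sum by (intro sum.cong refl) (simp add: poly_monom)

lemma ex_lt: assumes "fst x < n" "snd x < n" shows "ex x w < K"
proof -
  have g: "snd x div s < t" using assms(2) ts s0 by (simp add: div_less_iff_less_mult mult.commute)
  have "fst x * t + snd x div s < fst x * t + t" using g by simp
  also have "\<dots> = Suc (fst x) * t" by simp
  also have "\<dots> \<le> n * t" using assms(1) by (intro mult_le_mono1) simp
  finally have a: "fst x * t + snd x div s < n * t" .
  have "t - 1 - w div s \<le> t - 1" by simp
  with a show ?thesis unfolding ex_def K_def using t0 by linarith
qed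

lemma rc_high: assumes v: "valid_stream n \<sigma>" and k: "K \<le> k" shows "rc \<sigma> S k = 0"
proof -
  have "\<And>x w. x \<in> Adj \<sigma> \<Longrightarrow> ex x w \<noteq> k"
  proof -
    fix x w assume "x \<in> Adj \<sigma>"
    hence "fst x < n" "snd x < n" using Adj_sub[OF v] by auto
    from ex_lt[OF this, of w] k show "ex x w \<noteq> k" by simp
  qed
  thus ?thesis unfolding rc_def by simp
qed

lemma arith_uniq:
  fixes a g g' u :: nat
  assumes g: "g < t" and g': "g' < t"
  shows "a * t + g + (t - 1 - g') = u * t + t - 1 \<longleftrightarrow> a = u \<and> g = g'"
proof
  assume h: "a * t + g + (t - 1 - g') = u * t + t - 1"
  hence "a * t + g = u * t + g'" using g' t0 by linarith
  hence "(a * t + g) div t = (u * t + g') div t" "(a * t + g) mod t = (u * t + g') mod t" by simp_all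
  thus "a = u \<and> g = g'" using g g' t0 by simp
next
  assume "a = u \<and> g = g'"
  thus "a * t + g + (t - 1 - g') = u * t + t - 1" using g' t0 by simp
qed

lemma rc_diag:
  assumes v: "valid_stream n \<sigma>" and u: "u < n"
  shows "rc \<sigma> S (u * t + t - 1) = dS \<sigma> S u"
  unfolding rc_def dS_def
proof (intro sum.cong refl)
  fix x assume x: "x \<in> Adj \<sigma>"
  hence xn: "fst x < n" "snd x < n" using Adj_sub[OF v] by auto
  have gx: "snd x div s < t" using xn(2) ts s0 by (simp add: div_less_iff_less_mult mult.commute)
  have "(\<Sum>w<n. if w \<in> S \<and> w mod s = snd x mod s \<and> ex x w = u * t + t - 1 then 1 else 0) =
        (\<Sum>w<n. if w = snd x then (if fst x = u \<and> snd x \<in> S then 1 else 0) else (0::nat))"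
  proof (intro sum.cong refl)
    fix w assume "w \<in> {..<n}"
    hence gw: "w div s < t" using ts s0 by (simp add: div_less_iff_less_mult mult.commute)
    have e: "ex x w = u * t + t - 1 \<longleftrightarrow> fst x = u \<and> snd x div s = w div s"
      unfolding ex_def by (rule arith_uniq[OF gx gw])
    have "w mod s = snd x mod s \<and> snd x div s = w div s \<longleftrightarrow> w = snd x"
      by (metis div_mult_mod_eq)
    thus "(if w \<in> S \<and> w mod s = snd x mod s \<and> ex x w = u * t + t - 1 then 1 else 0) =
          (if w = snd x then (if fst x = u \<and> snd x \<in> S then 1 else 0) else (0::nat))"
      using e by auto
  qed
  also have "\<dots> = (if fst x = u \<and> snd x \<in> S then 1 else 0)" using xn by (simp add: sum.delta)
  finally show "(\<Sum>w<n. if w \<in> S \<and> w mod s = snd x mod s \<and> ex x w = u * t + t - 1 then 1 else (0::nat)) =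
        (if fst x = u \<and> snd x \<in> S then 1 else 0)" .
qed

lemma dS_zero: "valid_stream n \<sigma> \<Longrightarrow> dS \<sigma> S u = 0 \<longleftrightarrow> \<not> (\<exists>w\<in>S. adj \<sigma> u w)"
  unfolding dS_def using finite_Adj[of n \<sigma>] by (auto simp: Adj_def)

lemma dS_le: assumes v: "valid_stream n \<sigma>" shows "dS \<sigma> S u \<le> n"
proof -
  have "dS \<sigma> S u = card {x\<in>Adj \<sigma>. fst x = u \<and> snd x \<in> S}"
    unfolding dS_def using finite_Adj[OF v] by (simp add: sum.If_cases Int_def)
  also have "\<dots> \<le> card ({u} \<times> {..<n})"
    using Adj_sub[OF v] by (intro card_mono) auto
  finally show ?thesis by simp
qed

lemma qt_sum: "(\<Sum>i<K. qt r eta j i) = Qtrue (outp eta) r j"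
proof -
  let ?h = "\<lambda>w. w * t + t - 1"
  have hm: "?h w mod t = t - 1" "?h w div t = w" for w
  proof -
    have e: "?h w = (t - 1) + w * t" using t0 by simp
    have "(t - 1 + w * t) mod t = (t - 1) mod t" by (rule mod_mult_self1)
    also have "\<dots> = t - 1" using t0 by simp
    finally show "?h w mod t = t - 1" unfolding e .
    have "(t - 1 + w * t) div t = w + (t - 1) div t" by (rule div_mult_self1) (use t0 in simp)
    also have "\<dots> = w" using t0 by simp
    finally show "?h w div t = w" unfolding e .
  qed
  have inj: "inj_on ?h {..<n}" by (rule inj_onI) (metis hm(2))
  have "Qtrue (outp eta) r j = (\<Sum>w<n. qt r eta j (?h w))"
    unfolding Qtrue_def qt_def outp_def hm by (intro sum.cong refl) auto
  also have "\<dots> = (\<Sum>i\<in>?h ` {..<n}. qt r eta j i)" using sum.reindex[OF inj, of "qt r eta j"] by (simp add: comp_def)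
  also have "\<dots> = (\<Sum>i<K. qt r eta j i)"
  proof (rule sum.mono_neutral_left)
    show "?h ` {..<n} \<subseteq> {..<K}"
    proof
      fix i assume "i \<in> ?h ` {..<n}"
      then obtain w where w: "w < n" "i = ?h w" by auto
      have "w * t + t - 1 < K" using ex_lt[of "(w, 0)" 0] w(1) n0 unfolding ex_def by simp
      thus "i \<in> {..<K}" using w by simp
    qed
    show "\<forall>i\<in>{..<K} - ?h ` {..<n}. qt r eta j i = 0"
    proof
      fix i assume i: "i \<in> {..<K} - ?h ` {..<n}"
      show "qt r eta j i = 0"
      proof (rule ccontr)
        assume "qt r eta j i \<noteq> 0"
        hence c: "i mod t = t - 1" "i div t < n" unfolding qt_def by (auto split: if_splits)
        have "i = i div t * t + i mod t" by simp
        hence "i = ?h (i div t)" using c(1) t0 by linarith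
        with c(2) i show False by auto
      qed
    qed
  qed auto
  finally show ?thesis by simp
qed

definition Cpoly :: "(nat \<Rightarrow> nat) \<Rightarrow> int poly" where
  "Cpoly c = (\<Sum>i<K. monom (int (c i)) i)"

lemma coeff_C: "coeff (Cpoly c) k = (if k < K then int (c k) else 0)"
  unfolding Cpoly_def by (simp add: coeff_sum coeff_monom)

lemma eval_C: "poly (Cpoly c) (int r) = int (\<Sum>i<K. c i * r ^ i)"
  unfolding Cpoly_def by (simp add: poly_sum poly_monom of_nat_sum)

end

fun tobits :: "nat \<Rightarrow> nat \<Rightarrow> bool list" where
  "tobits 0 c = []"
| "tobits (Suc l) c = tobits l (c div 2) @ [odd c]"

lemma length_tobits[simp]: "length (tobits l c) = l"
  by (induction l arbitrary: c) auto

lemma drop_concat_blocks: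
  assumes "\<And>i. length (f i) = L" and "i \<le> K"
  shows "drop (i * L) (concat (map f [0..<K])) = concat (map f [i..<K])"
  using assms(2)
proof (induction i)
  case 0 then show ?case by simp
next
  case (Suc i)
  have iK: "i < K" using Suc.prems by simp
  have "drop (Suc i * L) (concat (map f [0..<K])) = drop L (drop (i * L) (concat (map f [0..<K])))"
    by (simp add: add.commute)
  also have "\<dots> = drop L (concat (map f [i..<K]))" using Suc by simp
  also have "[i..<K] = i # [Suc i..<K]" using iK by (simp add: upt_conv_Cons)
  finally show ?case using assms(1) by simp
qed

lemma int_dvd_small_eq:
  fixes a b p :: nat
  assumes "int p dvd int a - int b" "a < p" "b < p"
  shows "a = b"
proof (rule ccontr)
  assume "a \<noteq> b"
  hence "int a - int b \<noteq> 0" by simp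
  from dvd_imp_le_int[OF this assms(1)] have "\<bar>int p\<bar> \<le> \<bar>int a - int b\<bar>" .
  with assms(2,3) show False by linarith
qed

context misp begin

lemma bval_tobits: "bval (tobits l c) = c mod 2 ^ l"
proof (induction l arbitrary: c)
  case 0 then show ?case by (simp add: bval_def)
next
  case (Suc l)
  have "bval (tobits (Suc l) c) = 2 * ((c div 2) mod 2 ^ l) + of_bool (odd c)"
    using Suc by (simp add: bval_snoc)
  also have "\<dots> = 2 * ((c div 2) mod 2 ^ l) + c mod 2" by (simp add: of_bool_odd_eq_mod_2)
  also have "\<dots> = c mod (2 * 2 ^ l)" by (simp add: mod_mult2_eq)
  also have "\<dots> = c mod 2 ^ Suc l" by simp
  finally show ?case .
qed

lemma mod_sum_prod:
  "(\<Sum>j<s. (a j mod p) * (b j mod p)) mod p = (\<Sum>j<s. a j * b j) mod (p::nat)"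
proof -
  have "(\<Sum>j<s. (a j mod p) * (b j mod p)) mod p = (\<Sum>j<s. ((a j mod p) * (b j mod p)) mod p) mod p"
    by (rule mod_sum_eq[symmetric])
  also have "\<dots> = (\<Sum>j<s. (a j * b j) mod p) mod p" by (intro arg_cong2[where f="(mod)"] sum.cong refl mod_mult_eq)
  also have "\<dots> = (\<Sum>j<s. a j * b j) mod p" by (rule mod_sum_eq)
  finally show ?thesis .
qed

lemma degree_R_C:
  assumes v: "valid_stream n \<sigma>"
  shows "degree (Cpoly c - Rpoly \<sigma> S) \<le> K - 1" "degree (Rpoly \<sigma> S) \<le> K - 1"
proof -
  have "\<forall>k>K - 1. coeff (Cpoly c - Rpoly \<sigma> S) k = 0"
    using Kpos by (auto simp: coeff_C coeff_R rc_high[OF v])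
  thus "degree (Cpoly c - Rpoly \<sigma> S) \<le> K - 1" by (rule degree_le)
  have "\<forall>k>K - 1. coeff (Rpoly \<sigma> S) k = 0"
    using Kpos by (auto simp: coeff_R rc_high[OF v])
  thus "degree (Rpoly \<sigma> S) \<le> K - 1" by (rule degree_le)
qed

lemma sound_card:
  assumes v: "valid_stream n \<sigma>" and nm: "\<not> is_MIS n \<sigma> (outp eta)"
  shows "card {r \<in> {..<p}. acc (foldl hstep (F0 \<sigma> r) eta)} \<le> K - 1"
proof (cases "K * L \<le> length eta \<and> (\<forall>i<K. blk eta i < p)")
  case False
  have E: "{r \<in> {..<p}. acc (foldl hstep (F0 \<sigma> r) eta)} = {}"
  proof (cases "K * L \<le> length eta")
    case True
    then show ?thesis using False acc_long[OF True] by auto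
  next
    case False
    then show ?thesis using acc_short[of eta] by auto
  qed
  show ?thesis unfolding E by simp
next
  case True
  hence len: "K * L \<le> length eta" and cp: "\<forall>i<K. blk eta i < p" by auto
  define S where "S = outp eta"
  define D where "D = Cpoly (blk eta) - Rpoly \<sigma> S"
  have nz: "\<exists>k. \<not> int p dvd coeff D k"
  proof (rule ccontr)
    assume "\<not> ?thesis"
    hence all: "\<forall>k. int p dvd coeff D k" by simp
    have eqd: "blk eta (u * t + t - 1) = dS \<sigma> S u" if u: "u < n" for u
    proof -
      let ?k = "u * t + t - 1"
      have kK: "?k < K" using ex_lt[of "(u, 0)" 0] u n0 unfolding ex_def by simp
      have "coeff D ?k = int (blk eta ?k) - int (dS \<sigma> S u)"
        unfolding D_def coeff_diff coeff_C coeff_R rc_diag[OF v u] using kK by simp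
      hence "int p dvd int (blk eta ?k) - int (dS \<sigma> S u)" using all by metis
      moreover have "dS \<sigma> S u < p" using dS_le[OF v, of S u] n_lt_p by linarith
      ultimately show ?thesis using cp kK by (intro int_dvd_small_eq) auto
    qed
    have Smem: "u \<in> S \<longleftrightarrow> u < n \<and> dS \<sigma> S u = 0" for u
    proof -
      have "u \<in> S \<longleftrightarrow> u < n \<and> blk eta (u * t + t - 1) = 0" unfolding S_def outp_def by simp
      thus ?thesis using eqd by auto
    qed
    have "is_MIS n \<sigma> S"
      unfolding is_MIS_def
    proof (intro conjI ballI allI impI)
      show "S \<subseteq> {..<n}" using Smem by auto
    next
      fix u w assume uw: "u \<in> S" "w \<in> S"
      hence "dS \<sigma> S u = 0" using Smem[of u] by simp
      thus "\<not> adj \<sigma> u w" using dS_zero[OF v, of S u] uw by auto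
    next
      fix x assume x: "x < n" "x \<notin> S"
      hence "dS \<sigma> S x \<noteq> 0" using Smem[of x] by simp
      thus "\<exists>y\<in>S. adj \<sigma> x y" using dS_zero[OF v, of S x] by simp
    qed
    hence "is_MIS n \<sigma> (outp eta)" unfolding S_def .
    with nm show False by contradiction
  qed
  have sub: "{r \<in> {..<p}. acc (foldl hstep (F0 \<sigma> r) eta)} \<subseteq> {r \<in> {..<p}. int p dvd poly D (int r)}"
  proof
    fix r assume "r \<in> {r \<in> {..<p}. acc (foldl hstep (F0 \<sigma> r) eta)}"
    hence r: "r < p" and a: "acc (foldl hstep (F0 \<sigma> r) eta)" by auto
    have "(\<Sum>i<K. blk eta i * r ^ i) mod p = (\<Sum>j<s. (Ptrue \<sigma> r j mod p) * (Qtrue S r j mod p)) mod p"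
      using a acc_long[OF len] by (simp add: qt_sum S_def)
    also have "\<dots> = (\<Sum>j<s. Ptrue \<sigma> r j * Qtrue S r j) mod p" by (rule mod_sum_prod)
    finally have "int (\<Sum>i<K. blk eta i * r ^ i) mod int p = int (\<Sum>j<s. Ptrue \<sigma> r j * Qtrue S r j) mod int p"
      by (simp only: of_nat_mod[symmetric])
    hence "int p dvd int (\<Sum>i<K. blk eta i * r ^ i) - int (\<Sum>j<s. Ptrue \<sigma> r j * Qtrue S r j)"
      by (rule iffD1[OF mod_eq_dvd_iff])
    hence "int p dvd poly D (int r)" unfolding D_def by (simp add: eval_C eval_R)
    thus "r \<in> {r \<in> {..<p}. int p dvd poly D (int r)}" using r by simp
  qed
  have "card {r \<in> {..<p}. acc (foldl hstep (F0 \<sigma> r) eta)} \<le> card {r \<in> {..<p}. int p dvd poly D (int r)}"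
    by (rule card_mono[OF _ sub]) simp
  also have "\<dots> \<le> degree D" by (rule roots_mod_prime[OF pp nz])
  also have "\<dots> \<le> K - 1" unfolding D_def by (rule degree_R_C[OF v])
  finally show ?thesis .
qed

definition honest :: "(nat \<times> nat) list \<Rightarrow> nat set \<Rightarrow> bool list" where
  "honest \<sigma> S = concat (map (\<lambda>i. tobits L (rc \<sigma> S i mod p)) [0..<K])"

lemma honest_len: "length (honest \<sigma> S) = K * L"
  unfolding honest_def by (simp add: length_concat comp_def sum_list_triv)

lemma honest_blk: assumes i: "i < K" shows "blk (honest \<sigma> S) i = rc \<sigma> S i mod p"
proof -
  have "drop (i * L) (honest \<sigma> S) = concat (map (\<lambda>i. tobits L (rc \<sigma> S i mod p)) [i..<K])"
    unfolding honest_def using i by (intro drop_concat_blocks) auto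
  also have "[i..<K] = i # [Suc i..<K]" using i by (simp add: upt_conv_Cons)
  finally have "take L (drop (i * L) (honest \<sigma> S)) = tobits L (rc \<sigma> S i mod p)" by simp
  hence "blk (honest \<sigma> S) i = (rc \<sigma> S i mod p) mod 2 ^ L" unfolding blk_def by (simp add: bval_tobits)
  also have "\<dots> = rc \<sigma> S i mod p"
  proof -
    have "rc \<sigma> S i mod p < p" using p1 by simp
    hence "rc \<sigma> S i mod p < 2 ^ L" using pL by linarith
    thus ?thesis by simp
  qed
  finally show ?thesis .
qed

lemma poly_R_sum:
  assumes v: "valid_stream n \<sigma>"
  shows "(\<Sum>i<K. rc \<sigma> S i * r ^ i) = (\<Sum>j<s. Ptrue \<sigma> r j * Qtrue S r j)"
proof -
  have "int (\<Sum>i<K. rc \<sigma> S i * r ^ i) = (\<Sum>i<K. coeff (Rpoly \<sigma> S) i * int r ^ i)"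
    by (simp add: coeff_R of_nat_sum)
  also have "\<dots> = (\<Sum>i\<le>degree (Rpoly \<sigma> S). coeff (Rpoly \<sigma> S) i * int r ^ i)"
  proof (rule sum.mono_neutral_right)
    show "{..degree (Rpoly \<sigma> S)} \<subseteq> {..<K}" using degree_R_C(2)[OF v, of S] Kpos by auto
    show "\<forall>i\<in>{..<K} - {..degree (Rpoly \<sigma> S)}. coeff (Rpoly \<sigma> S) i * int r ^ i = 0"
      by (auto simp: coeff_eq_0)
  qed auto
  also have "\<dots> = poly (Rpoly \<sigma> S) (int r)" by (simp add: poly_altdef)
  also have "\<dots> = int (\<Sum>j<s. Ptrue \<sigma> r j * Qtrue S r j)" by (rule eval_R)
  finally show ?thesis by (simp only: of_nat_eq_iff)
qed

lemma complete:
  assumes v: "valid_stream n \<sigma>" and S: "is_MIS n \<sigma> S"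
  shows "length (honest \<sigma> S) = K * L" "outp (honest \<sigma> S) = S"
        "\<And>r. acc (foldl hstep (F0 \<sigma> r) (honest \<sigma> S))"
proof -
  show len: "length (honest \<sigma> S) = K * L" by (rule honest_len)
  have Sn: "S \<subseteq> {..<n}" and ind: "\<forall>u\<in>S. \<forall>w\<in>S. \<not> adj \<sigma> u w"
    and dom: "\<forall>x<n. x \<notin> S \<longrightarrow> (\<exists>y\<in>S. adj \<sigma> x y)" using S unfolding is_MIS_def by auto
  have diag: "blk (honest \<sigma> S) (u * t + t - 1) = dS \<sigma> S u" if u: "u < n" for u
  proof -
    have kK: "u * t + t - 1 < K" using ex_lt[of "(u, 0)" 0] u n0 unfolding ex_def by simp
    have "dS \<sigma> S u < p" using dS_le[OF v, of S u] n_lt_p by linarith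
    thus ?thesis using honest_blk[OF kK] rc_diag[OF v u] by simp
  qed
  show "outp (honest \<sigma> S) = S"
  proof
    show "outp (honest \<sigma> S) \<subseteq> S"
    proof
      fix u assume "u \<in> outp (honest \<sigma> S)"
      hence u: "u < n" "dS \<sigma> S u = 0" unfolding outp_def using diag by auto
      show "u \<in> S" using dom u dS_zero[OF v] by blast
    qed
    show "S \<subseteq> outp (honest \<sigma> S)"
    proof
      fix u assume u: "u \<in> S"
      hence "u < n" using Sn by auto
      moreover have "dS \<sigma> S u = 0" using dS_zero[OF v] ind u by blast
      ultimately show "u \<in> outp (honest \<sigma> S)" unfolding outp_def using diag by auto
    qed
  qed
  fix r
  have cp: "\<forall>i<K. blk (honest \<sigma> S) i < p" using honest_blk p1 by simp
  have "(\<Sum>i<K. blk (honest \<sigma> S) i * r ^ i) mod p = (\<Sum>i<K. (rc \<sigma> S i mod p) * r ^ i) mod p"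
    by (simp add: honest_blk)
  also have "\<dots> = (\<Sum>i<K. ((rc \<sigma> S i mod p) * r ^ i) mod p) mod p"
    by (rule mod_sum_eq[symmetric])
  also have "\<dots> = (\<Sum>i<K. (rc \<sigma> S i * r ^ i) mod p) mod p"
    by (intro arg_cong2[where f="(mod)"] sum.cong refl mod_mult_left_eq)
  also have "\<dots> = (\<Sum>i<K. rc \<sigma> S i * r ^ i) mod p" by (rule mod_sum_eq)
  also have "\<dots> = (\<Sum>j<s. Ptrue \<sigma> r j * Qtrue S r j) mod p" by (simp add: poly_R_sum[OF v])
  also have "\<dots> = (\<Sum>j<s. (Ptrue \<sigma> r j mod p) * (Qtrue S r j mod p)) mod p" by (rule mod_sum_prod[symmetric])
  finally show "acc (foldl hstep (F0 \<sigma> r) (honest \<sigma> S))"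
    using acc_long[of "honest \<sigma> S" \<sigma> r] len cp \<open>outp (honest \<sigma> S) = S\<close> by (simp add: qt_sum)
qed

end

lemma MIS_exists:
  assumes v: "valid_stream n \<sigma>"
  shows "\<exists>S. is_MIS n \<sigma> S"
proof -
  define F where "F = {S. S \<subseteq> {..<n} \<and> (\<forall>u\<in>S. \<forall>w\<in>S. \<not> adj \<sigma> u w)}"
  have fin: "finite F" unfolding F_def by (rule finite_subset[of _ "Pow {..<n}"]) auto
  have ne: "F \<noteq> {}" unfolding F_def by blast
  obtain S where S: "S \<in> F" and mx: "\<forall>b\<in>F. S \<le> b \<longrightarrow> S = b"
    using finite_has_maximal[OF fin ne] by blast
  have noloop: "\<not> adj \<sigma> x x" for x using v unfolding valid_stream_def adj_def by auto
  have sym: "adj \<sigma> u w \<longleftrightarrow> adj \<sigma> w u" for u w unfolding adj_def by auto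
  have "is_MIS n \<sigma> S"
    unfolding is_MIS_def
  proof (intro conjI allI impI)
    show "S \<subseteq> {..<n}" using S unfolding F_def by auto
    show "\<forall>u\<in>S. \<forall>w\<in>S. \<not> adj \<sigma> u w" using S unfolding F_def by auto
    fix x assume x: "x < n" "x \<notin> S"
    show "\<exists>y\<in>S. adj \<sigma> x y"
    proof (rule ccontr)
      assume "\<not> ?thesis"
      hence "insert x S \<in> F" using S x noloop sym unfolding F_def by auto
      with mx have "S = insert x S" by auto
      with x show False by auto
    qed
  qed
  thus ?thesis by blast
qed

context misp begin

lemma BB_pow: "BB ^ mm = 2 ^ (2 * L * mm)"
proof -
  have "BB ^ mm = (2 ^ 2) ^ (L * mm)" unfolding BB_def by (simp add: power_mult)
  also have "\<dots> = 2 ^ (2 * (L * mm))" by (rule power_mult[symmetric])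
  finally show ?thesis by (simp add: mult.assoc)
qed

lemma run_eq:
  assumes v: "valid_stream n \<sigma>" and r: "r < p"
  shows "v_acc VV (run VV \<sigma> eta (enc BB mm (init r))) = acc (foldl hstep (F0 \<sigma> r) eta)"
proof -
  have b0: "bnd BB mm (init r)" by (rule bnd_init[OF r])
  have s1: "foldl (v_in VV) (enc BB mm (init r)) \<sigma> = enc BB mm (foldl sstep (init r) \<sigma>)"
    and b1: "bnd BB mm (foldl sstep (init r) \<sigma>)"
    using foldl_lift[of BB mm sstep "init r" \<sigma>, OF BB0 bnd_sstep b0] unfolding VV_def by auto
  have s2: "foldl (v_help VV) (enc BB mm (foldl sstep (init r) \<sigma>)) eta
            = enc BB mm (foldl hstep (foldl sstep (init r) \<sigma>) eta)"
    and b2: "bnd BB mm (foldl hstep (foldl sstep (init r) \<sigma>) eta)"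
    using foldl_lift[of BB mm hstep "foldl sstep (init r) \<sigma>" eta, OF BB0 bnd_hstep b1] unfolding VV_def by auto
  show ?thesis unfolding run_def s1 s2 using b2 dec_enc[OF BB0 b2]
    by (simp add: VV_def stream_result[OF v])
qed

lemma accept_prob_eq:
  assumes v: "valid_stream n \<sigma>"
  shows "accept_prob VV \<sigma> eta = card {r \<in> {..<p}. acc (foldl hstep (F0 \<sigma> r) eta)} / p"
proof -
  have "accept_prob VV \<sigma> eta =
        measure_pmf.prob (pmf_of_set {..<p}) ((\<lambda>r. enc BB mm (init r)) -` {r. v_acc VV (run VV \<sigma> eta r)})"
    unfolding accept_prob_def by (simp add: VV_def)
  also have "\<dots> = card ({..<p} \<inter> ((\<lambda>r. enc BB mm (init r)) -` {r. v_acc VV (run VV \<sigma> eta r)})) / card {..<p::nat}"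
    using p1 by (subst measure_pmf_of_set) auto
  also have "{..<p} \<inter> ((\<lambda>r. enc BB mm (init r)) -` {r. v_acc VV (run VV \<sigma> eta r)}) =
             {r \<in> {..<p}. acc (foldl hstep (F0 \<sigma> r) eta)}"
    using run_eq[OF v] by auto
  finally show ?thesis by simp
qed

lemma scheme: "is_MIS_scheme n (K * L) (2 * L * mm) VV"
  unfolding is_MIS_scheme_def
proof (intro conjI allI impI)
  show "set_pmf (v_init VV) \<subseteq> {..<2 ^ (2 * L * mm)}"
    using enc_lt[OF BB0] p1 unfolding VV_def BB_pow[symmetric] by auto
  fix r :: nat and e :: "nat \<times> nat"
  show "v_in VV r e < 2 ^ (2 * L * mm)" using enc_lt[OF BB0] unfolding VV_def BB_pow[symmetric] by simp
next
  fix r :: nat and b :: bool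
  show "v_help VV r b < 2 ^ (2 * L * mm)" using enc_lt[OF BB0] unfolding VV_def BB_pow[symmetric] by simp
next
  fix \<sigma> assume v: "valid_stream n \<sigma>"
  obtain S where S: "is_MIS n \<sigma> S" using MIS_exists[OF v] by blast
  let ?eta = "honest \<sigma> S"
  have "length ?eta \<le> K * L" using complete(1)[OF v S] by simp
  moreover have "is_MIS n \<sigma> (v_out VV ?eta)" using complete(2)[OF v S] S by (simp add: VV_def)
  moreover have "accept_prob VV \<sigma> ?eta = 1"
  proof -
    have "{r \<in> {..<p}. acc (foldl hstep (F0 \<sigma> r) ?eta)} = {..<p}" using complete(3)[OF v S] by auto
    thus ?thesis unfolding accept_prob_eq[OF v] using p1 by simp
  qed
  ultimately show "\<exists>eta. length eta \<le> K * L \<and> is_MIS n \<sigma> (v_out VV eta) \<and> accept_prob VV \<sigma> eta = 1"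
    by blast
next
  fix \<sigma> eta assume v: "valid_stream n \<sigma>" and nm: "\<not> is_MIS n \<sigma> (v_out VV eta)"
  have nm': "\<not> is_MIS n \<sigma> (outp eta)" using nm by (simp add: VV_def)
  have c: "card {r \<in> {..<p}. acc (foldl hstep (F0 \<sigma> r) eta)} \<le> K - 1" by (rule sound_card[OF v nm'])
  have "3 * (K - 1) \<le> p" using pK' unfolding K_def by linarith
  hence "3 * real (card {r \<in> {..<p}. acc (foldl hstep (F0 \<sigma> r) eta)}) \<le> real p" using c by linarith
  thus "accept_prob VV \<sigma> eta \<le> 1 / 3" unfolding accept_prob_eq[OF v] using p1 by (simp add: field_simps)
qed

end

lemma lg_facts:
  fixes n :: nat
  defines "lg \<equiv> log 2 (real n + 2)"
  shows "lg \<ge> 1" "n + 2 \<le> 2 ^ nat \<lceil>lg\<rceil>" "real (nat \<lceil>lg\<rceil>) \<le> 2 * lg"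
proof -
  have "log 2 2 \<le> log 2 (real n + 2)" by (subst log_le_cancel_iff) auto
  thus l1: "lg \<ge> 1" unfolding lg_def by simp
  have "real (n + 2) = 2 powr lg" unfolding lg_def by simp
  also have "\<dots> \<le> 2 powr real (nat \<lceil>lg\<rceil>)" using l1 by (intro powr_mono) auto
  also have "\<dots> = real (2 ^ nat \<lceil>lg\<rceil>)" by (simp add: powr_realpow)
  finally show "n + 2 \<le> 2 ^ nat \<lceil>lg\<rceil>" by (simp only: of_nat_le_iff)
  have "real (nat \<lceil>lg\<rceil>) = \<lceil>lg\<rceil>" using l1 by simp
  also have "\<dots> \<le> lg + 1" by linarith
  also have "\<dots> \<le> 2 * lg" using l1 by simp
  finally show "real (nat \<lceil>lg\<rceil>) \<le> 2 * lg" .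
qed

lemma p_bound:
  fixes n N p :: nat
  assumes N: "N \<le> 3 * (n + 2) ^ 2" and p: "p \<le> 2 * N ^ 3" and n1: "n \<ge> 1"
  shows "p \<le> (n + 2) ^ 10"
proof -
  have "N ^ 3 \<le> (3 * (n + 2) ^ 2) ^ 3" using N by (intro power_mono) auto
  also have "\<dots> = 27 * (n + 2) ^ 6" by (simp add: power_mult_distrib power_mult[symmetric])
  finally have "p \<le> 54 * (n + 2) ^ 6" using p by linarith
  also have "54 * (n + 2) ^ 6 \<le> (n + 2) ^ 4 * (n + 2) ^ 6"
  proof -
    have a: "(3::nat) ^ 4 \<le> (n + 2) ^ 4" using n1 by (intro power_mono) auto
    have b: "(3::nat) ^ 4 = 81" by simp
    have "54 \<le> (n + 2) ^ 4" using a unfolding b by linarith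
    thus ?thesis by (intro mult_right_mono) auto
  qed
  also have "\<dots> = (n + 2) ^ 10" by (simp add: power_add[symmetric])
  finally show ?thesis .
qed

lemma main_bound:
  fixes n t s :: nat
  assumes t0: "t > 0" and s0: "s > 0" and ts: "t * s = n"
  shows "\<exists>h v V. is_MIS_scheme n h v V \<and>
          real h \<le> 280 * real (n * t) * (log 2 (real n + 2)) ^ 1 \<and>
          real v \<le> 280 * real s * (log 2 (real n + 2)) ^ 1"
proof -
  define lg where "lg = log 2 (real n + 2)"
  define l where "l = nat \<lceil>lg\<rceil>"
  define L where "L = 10 * l"
  have lg1: "lg \<ge> 1" and n2: "n + 2 \<le> 2 ^ l" and l2: "real l \<le> 2 * lg"
    using lg_facts[of n] unfolding lg_def l_def by auto
  define N where "N = max 4 (3 * (n * t + t))"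
  have N4: "N \<ge> 4" unfolding N_def by simp
  obtain p where pp: "prime p" and Np: "N < p" and pN: "p \<le> 2 * N ^ 3"
    using prime_between[OF N4] by blast
  have tn: "t \<le> n"
  proof -
    have "t * 1 \<le> t * s" using s0 by (intro mult_le_mono2) simp
    thus ?thesis using ts by simp
  qed
  have NB: "N \<le> 3 * (n + 2) ^ 2"
  proof -
    have "n * t + t \<le> n * n + n" using tn by (intro add_mono mult_le_mono2)
    also have "\<dots> \<le> (n + 2) * (n + 2)"
    proof -
      have "(n + 2) * (n + 2) = n * n + 4 * n + 4" by (simp add: algebra_simps)
      thus ?thesis by linarith
    qed
    also have "\<dots> = (n + 2) ^ 2" by (simp only: power2_eq_square)
    finally have a: "3 * (n * t + t) \<le> 3 * (n + 2) ^ 2" by simp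
    have "(2::nat) ^ 2 \<le> (n + 2) ^ 2" by (intro power_mono) auto
    hence "4 \<le> 3 * (n + 2) ^ 2" by simp
    with a show ?thesis unfolding N_def by simp
  qed
  have pL: "p \<le> 2 ^ L"
  proof -
    have "n \<ge> 1" using tn t0 by simp
    hence "p \<le> (n + 2) ^ 10" by (rule p_bound[OF NB pN])
    also have "\<dots> \<le> (2 ^ l) ^ 10" using n2 by (intro power_mono) auto
    also have "\<dots> = 2 ^ L" unfolding L_def by (simp add: power_mult[symmetric] mult.commute)
    finally show ?thesis .
  qed
  have pK: "3 * (n * t + t) \<le> p" using Np unfolding N_def by simp
  interpret M: misp n t s p L
    by (rule misp.intro[OF t0 s0 ts pp pK pL])
  have sch: "is_MIS_scheme n (M.K * L) (2 * L * M.mm) M.VV" by (rule M.scheme)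
  have Lb: "real L \<le> 20 * lg" unfolding L_def using l2 by simp
  have Kb: "M.K \<le> 2 * (n * t)"
  proof -
    have "1 * t \<le> n * t" using tn t0 by (intro mult_le_mono1) simp
    thus ?thesis unfolding M.K_def by linarith
  qed
  have hb: "real (M.K * L) \<le> 280 * real (n * t) * lg ^ 1"
  proof -
    have "real (M.K * L) = real M.K * real L" by simp
    also have "\<dots> \<le> (2 * real (n * t)) * (20 * lg)"
    proof (rule mult_mono)
      have "real M.K \<le> real (2 * (n * t))" using Kb by (simp only: of_nat_le_iff)
      thus "real M.K \<le> 2 * real (n * t)" by simp
    qed (use Lb in auto)
    also have "\<dots> \<le> 280 * real (n * t) * lg ^ 1" using lg1 by simp
    finally show ?thesis .
  qed
  have vb: "real (2 * L * M.mm) \<le> 280 * real s * lg ^ 1"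
  proof -
    have mmb: "M.mm \<le> 7 * s" unfolding M.mm_def using s0 by simp
    have "real (2 * L * M.mm) = 2 * real L * real M.mm" by simp
    also have "\<dots> \<le> 2 * (20 * lg) * (7 * real s)"
    proof (rule mult_mono)
      have "real M.mm \<le> real (7 * s)" using mmb by (simp only: of_nat_le_iff)
      thus "real M.mm \<le> 7 * real s" by simp
    qed (use Lb lg1 in auto)
    also have "\<dots> = 280 * real s * lg ^ 1" by simp
    finally show ?thesis .
  qed
  show "\<exists>h v V. is_MIS_scheme n h v V \<and>
          real h \<le> 280 * real (n * t) * (log 2 (real n + 2)) ^ 1 \<and>
          real v \<le> 280 * real s * (log 2 (real n + 2)) ^ 1"
    using sch hb vb unfolding lg_def by blast
qed

theorem theorem4p7:
  shows "\<exists>(C::real) (c::nat). C > 0 \<and>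
    (\<forall>n t s :: nat. t > 0 \<longrightarrow> s > 0 \<longrightarrow> t * s = n \<longrightarrow>
       (\<exists>h v V. is_MIS_scheme n h v V \<and>
          real h \<le> C * real (n * t) * (log 2 (real n + 2)) ^ c \<and>
          real v \<le> C * real s * (log 2 (real n + 2)) ^ c))"
  using main_bound by (intro exI[of _ 280] exI[of _ 1]) auto


end
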